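(* Let $X$ and $Y$ be nontrivial real Banach spaces. (a) If $X$ is locally octahedral, then $X\oplus_1 Y$ is locally octahedral. (b) If $X$ and $Y$ are locally octahedral and $1<p\leq\infty$, then $X\oplus_p Y$ is locally octahedral. (c) If $X\oplus_p Y$ is locally octahedral, where $1<p\leq\infty$, then $X$ is locally octahedral.
   Context: For $1\le p<\infty$, $X\oplus_p Y$ is $X\times Y$ with norm $\|(x,y)\|_p=(\|x\|^p+\|y\|^p)^{1/p}$; $X\oplus_\infty Y$ has norm $\max\{\|x\|,\|y\|\}$. A Banach space $Z$ is locally octahedral if for every $z\in Z$ and every $\varepsilon>0$ there is a $w\in S_Z$ (unit sphere) such that $\|sz+w\|\geq(1-\varepsilon)(|s|\|z\|+\|w\|)$ for all $s\in\mathbb{R}$. *)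

theory Defs
  imports "HOL-Analysis.Analysis"
begin

definition locally_octahedral_wrt :: "('v::real_vector \<Rightarrow> real) \<Rightarrow> bool" where
  "locally_octahedral_wrt N \<longleftrightarrow>
     (\<forall>z. \<forall>\<epsilon>>0. \<exists>w. N w = 1 \<and>
        (\<forall>s::real. N (s *\<^sub>R z + w) \<ge> (1 - \<epsilon>) * (\<bar>s\<bar> * N z + N w)))"

abbreviation locally_octahedral :: "'a::real_normed_vector itself \<Rightarrow> bool" where
  "locally_octahedral _ \<equiv> locally_octahedral_wrt (norm :: 'a \<Rightarrow> real)"

definition psum_norm :: "ereal \<Rightarrow> ('a::real_normed_vector \<times> 'b::real_normed_vector) \<Rightarrow> real" where
  "psum_norm p xy =
     (if p = \<infinity> then max (norm (fst xy)) (norm (snd xy))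
      else (norm (fst xy) powr real_of_ereal p + norm (snd xy) powr real_of_ereal p)
             powr (1 / real_of_ereal p))"

end

theory Submission
  imports Defs
begin

definition Gq :: "real \<Rightarrow> real \<Rightarrow> real \<Rightarrow> real" where
  "Gq q a b = (a powr q + b powr q) powr (1/q)"

lemma powr_inv1: "0 \<le> (x::real) \<Longrightarrow> 0 < q \<Longrightarrow> (x powr q) powr (1/q) = x"
  by (simp add: powr_powr powr_one)

lemma powr_inv2: "0 \<le> (x::real) \<Longrightarrow> 0 < q \<Longrightarrow> (x powr (1/q)) powr q = x"
  by (simp add: powr_powr powr_one)

lemma Gq_nonneg: "0 \<le> Gq q a b" by (simp add: Gq_def)

lemma Gq_mono: "0 < q \<Longrightarrow> 0 \<le> a \<Longrightarrow> a \<le> a' \<Longrightarrow> 0 \<le> b \<Longrightarrow> b \<le> b' \<Longrightarrow> Gq q a b \<le> Gq q a' b'"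
  unfolding Gq_def
  by (intro powr_mono2 add_mono) auto

lemma Gq_hom: assumes "0 < q" "0 \<le> c" "0 \<le> a" "0 \<le> b"
  shows "Gq q (c*a) (c*b) = c * Gq q a b"
proof -
  have "(c*a) powr q + (c*b) powr q = c powr q * (a powr q + b powr q)"
    using assms by (simp add: powr_mult algebra_simps)
  hence "Gq q (c*a) (c*b) = (c powr q) powr (1/q) * (a powr q + b powr q) powr (1/q)"
    unfolding Gq_def by (simp add: powr_mult)
  also have "\<dots> = c * Gq q a b" using assms by (simp add: powr_inv1 Gq_def)
  finally show ?thesis .
qed

lemma Gq_zero2: "0 < q \<Longrightarrow> 0 \<le> a \<Longrightarrow> Gq q a 0 = a"
  by (simp add: Gq_def powr_inv1)
lemma Gq_zero1: "0 < q \<Longrightarrow> 0 \<le> b \<Longrightarrow> Gq q 0 b = b"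
  by (simp add: Gq_def powr_inv1)

lemma Gq_le_sum: assumes "1 \<le> q" "0 \<le> a" "0 \<le> b" shows "Gq q a b \<le> a + b"
proof (cases "a + b = 0")
  case True hence "a = 0" "b = 0" using assms by auto
  thus ?thesis using assms by (simp add: Gq_def)
next
  case False
  hence S: "a + b > 0" using assms by linarith
  have ka: "(a/(a+b)) powr q \<le> a/(a+b)"
    using powr_mono'[of 1 q "a/(a+b)"] assms S by simp
  have kb: "(b/(a+b)) powr q \<le> b/(a+b)"
    using powr_mono'[of 1 q "b/(a+b)"] assms S by simp
  have "a powr q + b powr q = (a+b) powr q * ((a/(a+b)) powr q + (b/(a+b)) powr q)"
    using S assms by (simp add: powr_divide field_simps)
  also have "\<dots> \<le> (a+b) powr q * (a/(a+b) + b/(a+b))"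
    by (intro mult_left_mono add_mono ka kb) simp
  also have "\<dots> = (a+b) powr q" using S by (simp add: add_divide_distrib[symmetric])
  finally have "a powr q + b powr q \<le> (a+b) powr q" .
  hence "Gq q a b \<le> ((a+b) powr q) powr (1/q)"
    unfolding Gq_def using assms by (intro powr_mono2) auto
  thus ?thesis using S assms by (simp add: powr_inv1)
qed

lemma convex_half: fixes q x :: real assumes "1 \<le> q" "0 \<le> x"
  shows "(1 + x) powr q \<le> 2 powr (q - 1) * (1 + x powr q)"
proof (cases "x = 0")
  case True
  have "1 \<le> (2::real) powr (q-1)" using assms by (simp add: ge_one_powr_ge_zero)
  thus ?thesis using True assms by simp
next
  case False
  hence xp: "x > 0" using assms by simp
  have "((1 - 1/2) *\<^sub>R 1 + (1/2) *\<^sub>R x) powr q \<le> (1 - 1/2) * 1 powr q + (1/2) * x powr q"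
    using convex_onD[OF powr_convex[OF assms(1)], of "1/2" 1 x] xp by simp
  hence h: "((1+x)/2) powr q \<le> (1 + x powr q)/2" by (simp add: field_simps)
  have "(1+x) powr q = 2 powr q * ((1+x)/2) powr q"
    using xp by (simp add: powr_divide)
  also have "\<dots> \<le> 2 powr q * ((1 + x powr q)/2)" using h by (intro mult_left_mono) auto
  also have "\<dots> = 2 powr (q - 1) * (1 + x powr q)" by (simp add: powr_diff)
  finally show ?thesis .
qed


definition G :: "ereal \<Rightarrow> real \<Rightarrow> real \<Rightarrow> real" where
  "G p a b = (if p = \<infinity> then max a b else Gq (real_of_ereal p) a b)"

lemma psum_G: "psum_norm p xy = G p (norm (fst xy)) (norm (snd xy))"
  by (simp add: psum_norm_def G_def Gq_def)

lemma q_pos: "1 \<le> p \<Longrightarrow> p \<noteq> \<infinity> \<Longrightarrow> 1 \<le> real_of_ereal p"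
  by (cases p) auto

lemma G_nonneg: "0 \<le> a \<Longrightarrow> 0 \<le> G p a b"
  by (auto simp: G_def Gq_nonneg le_max_iff_disj)

lemma G_mono: "1 \<le> p \<Longrightarrow> 0 \<le> a \<Longrightarrow> a \<le> a' \<Longrightarrow> 0 \<le> b \<Longrightarrow> b \<le> b' \<Longrightarrow> G p a b \<le> G p a' b'"
  using q_pos[of p] Gq_mono[of "real_of_ereal p" a a' b b'] by (auto simp: G_def)

lemma G_hom: "1 \<le> p \<Longrightarrow> 0 \<le> c \<Longrightarrow> 0 \<le> a \<Longrightarrow> 0 \<le> b \<Longrightarrow> G p (c*a) (c*b) = c * G p a b"
  using q_pos[of p] Gq_hom[of "real_of_ereal p" c a b] by (auto simp: G_def max_mult_distrib_left)

lemma G_zero2: "1 \<le> p \<Longrightarrow> 0 \<le> a \<Longrightarrow> G p a 0 = a"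
  using q_pos[of p] Gq_zero2[of "real_of_ereal p" a] by (auto simp: G_def)

lemma G_zero1: "1 \<le> p \<Longrightarrow> 0 \<le> b \<Longrightarrow> G p 0 b = b"
  using q_pos[of p] Gq_zero1[of "real_of_ereal p" b] by (auto simp: G_def)

lemma loh_small:
  assumes nn: "\<And>v. N v \<ge> 0"
    and h: "\<And>z \<epsilon>. 0 < \<epsilon> \<Longrightarrow> \<epsilon> < 1 \<Longrightarrow> \<exists>w. N w = 1 \<and> (\<forall>s::real. N (s *\<^sub>R z + w) \<ge> (1 - \<epsilon>) * (\<bar>s\<bar> * N z + N w))"
  shows "locally_octahedral_wrt N"
  unfolding locally_octahedral_wrt_def
proof (intro allI impI)
  fix z and \<epsilon> :: real assume e: "\<epsilon> > 0"
  show "\<exists>w. N w = 1 \<and> (\<forall>s::real. N (s *\<^sub>R z + w) \<ge> (1 - \<epsilon>) * (\<bar>s\<bar> * N z + N w))"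
  proof (cases "\<epsilon> < 1")
    case True thus ?thesis using h e by blast
  next
    case False
    obtain w where w: "N w = 1" "\<forall>s::real. N (s *\<^sub>R z + w) \<ge> (1 - 1/2) * (\<bar>s\<bar> * N z + N w)"
      using h[of "1/2" z] by auto
    show ?thesis
    proof (intro exI conjI allI)
      fix s :: real
      have "0 \<le> \<bar>s\<bar> * N z + N w" using nn[of z] nn[of w] by simp
      hence "(1 - \<epsilon>) * (\<bar>s\<bar> * N z + N w) \<le> (1 - 1/2) * (\<bar>s\<bar> * N z + N w)"
        using False by (intro mult_right_mono) auto
      thus "N (s *\<^sub>R z + w) \<ge> (1 - \<epsilon>) * (\<bar>s\<bar> * N z + N w)" using w(2)[rule_format, of s] by linarith
    qed (use w in auto)
  qed
qed

lemma scale_w: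
  fixes x w :: "'a::real_normed_vector"
  assumes h: "\<forall>t::real. norm (t *\<^sub>R x + w) \<ge> (1 - \<epsilon>) * (\<bar>t\<bar> * norm x + norm w)"
    and "norm w = 1" "0 \<le> a" "0 \<le> \<epsilon>"
  shows "norm (s *\<^sub>R x + a *\<^sub>R w) \<ge> (1 - \<epsilon>) * (\<bar>s\<bar> * norm x + a)"
proof (cases "a = 0")
  case True
  have "(1 - \<epsilon>) * (\<bar>s\<bar> * norm x) \<le> 1 * (\<bar>s\<bar> * norm x)"
    using assms by (intro mult_right_mono) auto
  thus ?thesis using True by simp
next
  case False
  hence a: "a > 0" using assms by simp
  have "s *\<^sub>R x + a *\<^sub>R w = a *\<^sub>R ((s/a) *\<^sub>R x + w)" using a by (simp add: algebra_simps)
  hence "norm (s *\<^sub>R x + a *\<^sub>R w) = a * norm ((s/a) *\<^sub>R x + w)" using a by simp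
  also have "\<dots> \<ge> a * ((1 - \<epsilon>) * (\<bar>s/a\<bar> * norm x + 1))"
    using h[rule_format, of "s/a"] assms a by (intro mult_left_mono) auto
  moreover have "a * (\<bar>s/a\<bar> * norm x + 1) = \<bar>s\<bar> * norm x + a"
    using a by (simp add: field_simps abs_div abs_of_pos)
  hence "a * ((1 - \<epsilon>) * (\<bar>s/a\<bar> * norm x + 1)) = (1 - \<epsilon>) * (\<bar>s\<bar> * norm x + a)"
    by (metis mult.left_commute)
  ultimately show ?thesis by linarith
qed


lemma psum_nonneg: "1 \<le> p \<Longrightarrow> 0 \<le> psum_norm p xy"
  by (simp add: psum_G G_nonneg)

lemma partA:
  assumes X: "locally_octahedral_wrt (norm :: 'a::real_normed_vector \<Rightarrow> real)"
  shows "locally_octahedral_wrt (psum_norm 1 :: 'a \<times> 'b::real_normed_vector \<Rightarrow> real)"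
proof (rule loh_small)
  have P: "psum_norm 1 xy = norm (fst xy) + norm (snd xy)" for xy :: "'a \<times> 'b"
    by (simp add: psum_norm_def powr_one)
  show "0 \<le> psum_norm 1 v" for v :: "'a \<times> 'b" by (simp add: P)
  fix z :: "'a \<times> 'b" and \<epsilon> :: real assume e: "0 < \<epsilon>" "\<epsilon> < 1"
  obtain x y where z: "z = (x, y)" by fastforce
  obtain w where w: "norm w = 1" "\<forall>s::real. norm (s *\<^sub>R x + w) \<ge> (1 - \<epsilon>) * (\<bar>s\<bar> * norm x + norm w)"
    using X e unfolding locally_octahedral_wrt_def by blast
  show "\<exists>W. psum_norm 1 W = 1 \<and> (\<forall>s::real. psum_norm 1 (s *\<^sub>R z + W) \<ge> (1 - \<epsilon>) * (\<bar>s\<bar> * psum_norm 1 z + psum_norm 1 W))"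
  proof (intro exI[of _ "(w, 0)"] conjI allI)
    show "psum_norm 1 (w, 0::'b) = 1" using w by (simp add: P)
    fix s :: real
    have "(1 - \<epsilon>) * (\<bar>s\<bar> * norm y) \<le> \<bar>s\<bar> * norm y" using e by (simp add: mult_left_le_one_le)
    hence "(1 - \<epsilon>) * (\<bar>s\<bar> * (norm x + norm y) + 1) \<le> norm (s *\<^sub>R x + w) + \<bar>s\<bar> * norm y"
      using w(2)[rule_format, of s] w(1) by (simp add: algebra_simps)
    thus "psum_norm 1 (s *\<^sub>R z + (w, 0)) \<ge> (1 - \<epsilon>) * (\<bar>s\<bar> * psum_norm 1 z + psum_norm 1 (w, 0::'b))"
      using w(1) by (simp add: P z)
  qed
qed

lemma partB:
  fixes p :: ereal
  assumes p: "1 \<le> p"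
    and X: "locally_octahedral_wrt (norm :: 'a::real_normed_vector \<Rightarrow> real)"
    and Y: "locally_octahedral_wrt (norm :: 'b::real_normed_vector \<Rightarrow> real)"
  shows "locally_octahedral_wrt (psum_norm p :: 'a \<times> 'b \<Rightarrow> real)"
proof (rule loh_small)
  show "0 \<le> psum_norm p v" for v :: "'a \<times> 'b" using p by (rule psum_nonneg)
  fix z :: "'a \<times> 'b" and \<epsilon> :: real assume e: "0 < \<epsilon>" "\<epsilon> < 1"
  obtain x y where z: "z = (x, y)" by fastforce
  obtain w1 where w1: "norm w1 = 1" "\<forall>s::real. norm (s *\<^sub>R x + w1) \<ge> (1 - \<epsilon>) * (\<bar>s\<bar> * norm x + norm w1)"
    using X e unfolding locally_octahedral_wrt_def by blast
  obtain w2 where w2: "norm w2 = 1" "\<forall>s::real. norm (s *\<^sub>R y + w2) \<ge> (1 - \<epsilon>) * (\<bar>s\<bar> * norm y + norm w2)"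
    using Y e unfolding locally_octahedral_wrt_def by blast
  show "\<exists>W. psum_norm p W = 1 \<and> (\<forall>s::real. psum_norm p (s *\<^sub>R z + W) \<ge> (1 - \<epsilon>) * (\<bar>s\<bar> * psum_norm p z + psum_norm p W))"
  proof (cases "x = 0 \<and> y = 0")
    case True
    show ?thesis
    proof (intro exI[of _ "(w1, 0)"] conjI allI)
      show "psum_norm p (w1, 0::'b) = 1" using w1 p by (simp add: psum_G G_zero2)
      fix s :: real
      have "psum_norm p z = 0" using True p by (simp add: z psum_G G_zero2)
      moreover have "psum_norm p (s *\<^sub>R z + (w1, 0)) = 1" using True w1 p by (simp add: z psum_G G_zero2)
      ultimately show "psum_norm p (s *\<^sub>R z + (w1, 0)) \<ge> (1 - \<epsilon>) * (\<bar>s\<bar> * psum_norm p z + psum_norm p (w1, 0::'b))"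
        using w1 p e by (simp add: psum_G G_zero2)
    qed
  next
    case False
    define n where "n = G p (norm x) (norm y)"
    have "n \<ge> norm x" unfolding n_def using G_mono[OF p, of "norm x" "norm x" 0 "norm y"] G_zero2[OF p, of "norm x"] by simp
    moreover have "n \<ge> norm y" unfolding n_def using G_mono[OF p, of 0 "norm x" "norm y" "norm y"] G_zero1[OF p, of "norm y"] by simp
    ultimately have npos: "n > 0" using False by (metis zero_less_norm_iff order_less_le_trans)
    have nz: "psum_norm p z = n" by (simp add: z psum_G n_def)
    define a where "a = norm x / n"
    define b where "b = norm y / n"
    have ab: "a \<ge> 0" "b \<ge> 0" using npos by (auto simp: a_def b_def)
    have W1: "psum_norm p (a *\<^sub>R w1, b *\<^sub>R w2) = 1"
    proof -
      have "psum_norm p (a *\<^sub>R w1, b *\<^sub>R w2) = G p ((1/n) * norm x) ((1/n) * norm y)"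
        using w1 w2 ab npos by (simp add: psum_G a_def b_def)
      also have "\<dots> = (1/n) * n" using G_hom[OF p, of "1/n" "norm x" "norm y"] npos by (simp add: n_def)
      finally show ?thesis using npos by simp
    qed
    show ?thesis
    proof (intro exI[of _ "(a *\<^sub>R w1, b *\<^sub>R w2)"] conjI allI)
      show "psum_norm p (a *\<^sub>R w1, b *\<^sub>R w2) = 1" by (rule W1)
      fix s :: real
      define c where "c = (1 - \<epsilon>) * (\<bar>s\<bar> + 1/n)"
      have c: "c \<ge> 0" using e npos by (simp add: c_def)
      have hx: "norm (s *\<^sub>R x + a *\<^sub>R w1) \<ge> c * norm x"
        using scale_w[OF w1(2) w1(1) ab(1), of s] e npos by (simp add: c_def a_def algebra_simps)
      have hy: "norm (s *\<^sub>R y + b *\<^sub>R w2) \<ge> c * norm y"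
        using scale_w[OF w2(2) w2(1) ab(2), of s] e npos by (simp add: c_def b_def algebra_simps)
      have "psum_norm p (s *\<^sub>R z + (a *\<^sub>R w1, b *\<^sub>R w2)) = G p (norm (s *\<^sub>R x + a *\<^sub>R w1)) (norm (s *\<^sub>R y + b *\<^sub>R w2))"
        by (simp add: z psum_G)
      also have "\<dots> \<ge> G p (c * norm x) (c * norm y)"
        using G_mono[OF p] hx hy c by simp
      moreover have "G p (c * norm x) (c * norm y) = c * n" using G_hom[OF p c] by (simp add: n_def)
      moreover have "c * n = (1 - \<epsilon>) * (\<bar>s\<bar> * n + 1)" using npos by (simp add: c_def field_simps)
      ultimately show "psum_norm p (s *\<^sub>R z + (a *\<^sub>R w1, b *\<^sub>R w2)) \<ge> (1 - \<epsilon>) * (\<bar>s\<bar> * psum_norm p z + psum_norm p (a *\<^sub>R w1, b *\<^sub>R w2))"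
        using W1 nz by simp
    qed
  qed
qed


lemma normalize_u:
  fixes u :: "'a::real_normed_vector"
  assumes "0 < norm u" "norm u \<le> 1"
  shows "norm ((1 / norm u) *\<^sub>R u) = 1" "norm (u - (1 / norm u) *\<^sub>R u) = 1 - norm u"
proof -
  show "norm ((1 / norm u) *\<^sub>R u) = 1" using assms by simp
  have "u - (1 / norm u) *\<^sub>R u = (1 - 1 / norm u) *\<^sub>R u" by (simp add: algebra_simps)
  hence "norm (u - (1 / norm u) *\<^sub>R u) = \<bar>1 - 1 / norm u\<bar> * norm u" by simp
  also have "\<bar>1 - 1 / norm u\<bar> = 1 / norm u - 1" using assms by (simp add: field_simps)
  finally show "norm (u - (1 / norm u) *\<^sub>R u) = 1 - norm u" using assms by (simp add: field_simps)
qed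

lemma partC_inf:
  fixes x :: "'a::real_normed_vector"
  assumes Z: "locally_octahedral_wrt (psum_norm \<infinity> :: 'a \<times> 'b::real_normed_vector \<Rightarrow> real)"
    and x: "x \<noteq> 0" and e: "0 < \<epsilon>" "\<epsilon> < 1"
  shows "\<exists>w. norm w = 1 \<and> (\<forall>s::real. norm (s *\<^sub>R x + w) \<ge> (1 - \<epsilon>) * (\<bar>s\<bar> * norm x + norm w))"
proof -
  have P: "psum_norm \<infinity> xy = max (norm (fst xy)) (norm (snd xy))" for xy :: "'a \<times> 'b"
    by (simp add: psum_norm_def)
  define \<delta> where "\<delta> = \<epsilon> / 8"
  have d: "0 < \<delta>" "\<delta> < 1/8" using e by (auto simp: \<delta>_def)
  obtain W :: "'a \<times> 'b" where W: "psum_norm \<infinity> W = 1"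
    "\<forall>s::real. psum_norm \<infinity> (s *\<^sub>R (x, 0) + W) \<ge> (1 - \<delta>) * (\<bar>s\<bar> * psum_norm \<infinity> (x, 0::'b) + psum_norm \<infinity> W)"
    using Z d unfolding locally_octahedral_wrt_def by blast
  obtain u v where uv: "W = (u, v)" by fastforce
  have M: "max (norm u) (norm v) = 1" using W(1) by (simp add: P uv)
  have H: "max (norm (s *\<^sub>R x + u)) (norm v) \<ge> (1 - \<delta>) * (\<bar>s\<bar> * norm x + 1)" for s
    using W(2)[rule_format, of s] W(1) by (simp add: P uv)
  have nx: "norm x > 0" using x by simp
  have "max (norm ((1 / norm x) *\<^sub>R x + u)) (norm v) \<ge> (1 - \<delta>) * 2"
    using H[of "1 / norm x"] nx by simp
  hence "norm ((1 / norm x) *\<^sub>R x + u) \<ge> (1 - \<delta>) * 2 \<or> norm v \<ge> (1 - \<delta>) * 2"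
    by (simp add: le_max_iff_disj)
  moreover have "norm v \<le> 1" using M by linarith
  moreover have "(1 - \<delta>) * 2 > 1" using d by simp
  ultimately have "norm ((1 / norm x) *\<^sub>R x + u) \<ge> (1 - \<delta>) * 2" by linarith
  moreover have "norm ((1 / norm x) *\<^sub>R x + u) \<le> 1 + norm u"
    using norm_triangle_ineq[of "(1 / norm x) *\<^sub>R x" u] nx by simp
  ultimately have al: "norm u \<ge> 1 - 2 * \<delta>" by (simp add: algebra_simps)
  have au: "norm u \<le> 1" using M by linarith
  have ap: "norm u > 0" using al d by linarith
  define w where "w = (1 / norm u) *\<^sub>R u"
  have w1: "norm w = 1" and wu: "norm (u - w) = 1 - norm u" using normalize_u[OF ap au] by (auto simp: w_def)
  show ?thesis
  proof (intro exI conjI allI)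
    show "norm w = 1" by (rule w1)
    fix s :: real
    define T where "T = \<bar>s\<bar> * norm x"
    have T0: "T \<ge> 0" by (simp add: T_def)
    have tri: "norm (s *\<^sub>R x + w) \<ge> norm (s *\<^sub>R x + u) - norm (u - w)"
      using norm_triangle_ineq[of "s *\<^sub>R x + w" "u - w"] by simp
    show "norm (s *\<^sub>R x + w) \<ge> (1 - \<epsilon>) * (\<bar>s\<bar> * norm x + norm w)"
    proof (cases "norm (s *\<^sub>R x + u) \<ge> (1 - \<delta>) * (T + 1)")
      case True
      have "(\<epsilon> - \<delta>) * (T + 1) \<ge> (\<epsilon> - \<delta>) * 1" using d e T0 by (intro mult_left_mono) (auto simp: \<delta>_def)
      hence "(1 - \<epsilon>) * (T + 1) \<le> (1 - \<delta>) * (T + 1) - 2 * \<delta>" using d by (simp add: algebra_simps \<delta>_def)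
      thus ?thesis using True tri wu al w1 by (simp add: T_def)
    next
      case False
      hence "norm v \<ge> (1 - \<delta>) * (T + 1)" using H[of s] by (simp add: T_def)
      hence "(1 - \<delta>) * (T + 1) \<le> 1" using M by linarith
      hence T1: "T \<le> \<delta> + T * \<delta>" by (simp add: algebra_simps)
      have "T * \<delta> \<le> T * (1/8)" using d T0 by (intro mult_left_mono) auto
      hence T2: "T \<le> 2 * \<delta>" using T1 d by linarith
      have "norm (s *\<^sub>R x + w) \<ge> norm w - norm (s *\<^sub>R x)"
        using norm_triangle_ineq2[of w "- (s *\<^sub>R x)"] by (simp add: add.commute)
      hence "norm (s *\<^sub>R x + w) \<ge> 1 - T" using w1 by (simp add: T_def)
      moreover have "(1 - \<epsilon>) * (T + 1) \<le> 1 - T"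
      proof -
        have "\<epsilon> * T \<ge> 0" using e T0 by simp
        thus ?thesis using T2 d by (simp add: algebra_simps \<delta>_def)
      qed
      ultimately show ?thesis using w1 by (simp add: T_def)
    qed
  qed
qed


lemma partC_fin:
  fixes x :: "'a::real_normed_vector" and q :: real
  assumes Z: "locally_octahedral_wrt (psum_norm (ereal q) :: 'a \<times> 'b::real_normed_vector \<Rightarrow> real)"
    and q: "1 < q" and x: "x \<noteq> 0" and e: "0 < \<epsilon>" "\<epsilon> < 1"
  shows "\<exists>w. norm w = 1 \<and> (\<forall>s::real. norm (s *\<^sub>R x + w) \<ge> (1 - \<epsilon>) * (\<bar>s\<bar> * norm x + norm w))"
proof -
  have P: "psum_norm (ereal q) xy = Gq q (norm (fst xy)) (norm (snd xy))" for xy :: "'a \<times> 'b"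
    by (simp add: psum_norm_def Gq_def)
  have q0: "0 < q" using q by simp
  define \<eta> where "\<eta> = \<epsilon> / 4"
  have et: "0 < \<eta>" "\<eta> < 1" using e by (auto simp: \<eta>_def)
  define c where "c = 2 powr (q - 1) - 1"
  have c0: "c > 0" unfolding c_def using gr_one_powr[of 2 "q - 1"] q by simp
  have c2: "c < 2 powr q"
  proof -
    have "2 powr (q - 1) \<le> 2 powr q" by (intro powr_mono) auto
    thus ?thesis unfolding c_def by linarith
  qed
  define \<theta> where "\<theta> = c * \<eta> powr q / 2 powr q"
  have etq: "\<eta> powr q < 1" using powr_less_mono2[OF q0, of \<eta> 1] et by simp
  have th: "0 < \<theta>" "\<theta> < 1"
  proof -
    show "0 < \<theta>" using c0 et by (simp add: \<theta>_def)
    have "c * \<eta> powr q < 2 powr q * 1"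
      using c2 etq c0 by (intro mult_strict_mono) auto
    thus "\<theta> < 1" by (simp add: \<theta>_def)
  qed
  define r where "r = (1 - \<theta>) powr (1/q)"
  have r1: "r < 1" using powr_less_mono2[of "1/q" "1 - \<theta>" 1] th q0 by (simp add: r_def)
  have r0: "0 \<le> r" by (simp add: r_def)
  define \<delta> where "\<delta> = min (\<epsilon> / 2) (1 - r)"
  have d: "0 < \<delta>" "\<delta> \<le> \<epsilon> / 2" "\<delta> \<le> 1 - r" using e r1 unfolding \<delta>_def by (auto simp: min_def)
  have dq: "(1 - \<delta>) powr q \<ge> 1 - \<theta>"
  proof -
    have "r powr q \<le> (1 - \<delta>) powr q" using d r0 q0 by (intro powr_mono2) auto
    thus ?thesis using th q0 by (simp add: r_def powr_inv2)
  qed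
  obtain W :: "'a \<times> 'b" where W: "psum_norm (ereal q) W = 1"
    "\<forall>s::real. psum_norm (ereal q) (s *\<^sub>R (x, 0) + W) \<ge> (1 - \<delta>) * (\<bar>s\<bar> * psum_norm (ereal q) (x, 0::'b) + psum_norm (ereal q) W)"
    using Z d unfolding locally_octahedral_wrt_def by blast
  obtain u v where uv: "W = (u, v)" by fastforce
  define \<alpha> where "\<alpha> = norm u"
  define \<beta> where "\<beta> = norm v"
  have ab0: "\<alpha> \<ge> 0" "\<beta> \<ge> 0" by (auto simp: \<alpha>_def \<beta>_def)
  have M: "Gq q \<alpha> \<beta> = 1" using W(1) by (simp add: P uv \<alpha>_def \<beta>_def)
  have Mq: "\<alpha> powr q + \<beta> powr q = 1"
  proof -
    have "\<alpha> powr q + \<beta> powr q = ((\<alpha> powr q + \<beta> powr q) powr (1/q)) powr q"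
      using q0 by (simp add: powr_inv2)
    also have "\<dots> = 1" using M by (simp add: Gq_def)
    finally show ?thesis .
  qed
  have H: "Gq q (norm (s *\<^sub>R x + u)) \<beta> \<ge> (1 - \<delta>) * (\<bar>s\<bar> * norm x + 1)" for s
    using W(2)[rule_format, of s] W(1) q0 by (simp add: P uv \<beta>_def Gq_zero2)
  have nx: "norm x > 0" using x by simp
  have au: "\<alpha> \<le> 1"
  proof (rule ccontr)
    assume "\<not> \<alpha> \<le> 1"
    hence "1 powr q < \<alpha> powr q" using q0 by (intro powr_less_mono2) auto
    thus False using Mq powr_ge_zero[of \<beta> q] by simp
  qed
  have "Gq q (norm ((1 / norm x) *\<^sub>R x + u)) \<beta> \<ge> (1 - \<delta>) * 2"
    using H[of "1 / norm x"] nx by simp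
  moreover have "norm ((1 / norm x) *\<^sub>R x + u) \<le> 1 + \<alpha>"
    using norm_triangle_ineq[of "(1 / norm x) *\<^sub>R x" u] nx by (simp add: \<alpha>_def)
  ultimately have "Gq q (1 + \<alpha>) \<beta> \<ge> (1 - \<delta>) * 2"
    using Gq_mono[OF q0, of "norm ((1 / norm x) *\<^sub>R x + u)" "1 + \<alpha>" \<beta> \<beta>] ab0 by simp
  hence "(Gq q (1 + \<alpha>) \<beta>) powr q \<ge> ((1 - \<delta>) * 2) powr q"
    using d e q0 by (intro powr_mono2) auto
  moreover have "((1 - \<delta>) * 2) powr q = (1 - \<delta>) powr q * 2 powr q"
    by (rule powr_mult)
  moreover have "(Gq q (1 + \<alpha>) \<beta>) powr q = (1 + \<alpha>) powr q + \<beta> powr q"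
    unfolding Gq_def using q0 by (intro powr_inv2) auto
  ultimately have "(1 + \<alpha>) powr q + \<beta> powr q \<ge> (1 - \<delta>) powr q * 2 powr q"
    by simp
  moreover have "(1 + \<alpha>) powr q \<le> 2 powr (q - 1) * (1 + \<alpha> powr q)"
    using convex_half[of q \<alpha>] q ab0 by simp
  moreover have "2 powr (q - 1) * (1 + \<alpha> powr q) = 2 powr q - 2 powr (q - 1) * \<beta> powr q"
  proof -
    have "2 powr (q - 1) * 2 = (2::real) powr q"
      by (simp add: powr_diff)
    moreover have "\<alpha> powr q = 1 - \<beta> powr q" using Mq by linarith
    ultimately show ?thesis
      by (metis (no_types, opaque_lifting) add_diff_eq right_diff_distrib one_add_one)
  qed
  moreover have "c * \<beta> powr q = 2 powr (q - 1) * \<beta> powr q - \<beta> powr q"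
    unfolding c_def by (simp add: algebra_simps)
  ultimately have "(1 - \<delta>) powr q * 2 powr q \<le> 2 powr q - c * \<beta> powr q"
    by linarith
  moreover have "(1 - \<theta>) * 2 powr q \<le> (1 - \<delta>) powr q * 2 powr q"
    using dq by (intro mult_right_mono) auto
  ultimately have "c * \<beta> powr q \<le> \<theta> * 2 powr q" by (simp add: algebra_simps)
  also have "\<dots> = c * \<eta> powr q" by (simp add: \<theta>_def)
  finally have "\<beta> powr q \<le> \<eta> powr q" using c0 by simp
  hence bet: "\<beta> \<le> \<eta>"
    using powr_less_mono2[OF q0, of \<eta> \<beta>] et ab0 by (meson not_less less_imp_le)
  have "\<eta> powr q \<le> \<eta> powr 1" using powr_mono'[of 1 q \<eta>] et q by simp
  hence "\<eta> powr q \<le> \<eta>" using et by simp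
  moreover have "\<alpha> powr q \<le> \<alpha> powr 1" using powr_mono'[of 1 q \<alpha>] au ab0 q by simp
  ultimately have al: "\<alpha> \<ge> 1 - \<eta>" using Mq \<open>\<beta> powr q \<le> \<eta> powr q\<close> ab0 by simp
  have ap: "norm u > 0" using al et unfolding \<alpha>_def by linarith
  define w where "w = (1 / norm u) *\<^sub>R u"
  have w1: "norm w = 1" and wu: "norm (u - w) = 1 - \<alpha>"
    using normalize_u[OF ap au[unfolded \<alpha>_def]] by (auto simp: w_def \<alpha>_def)
  show ?thesis
  proof (intro exI conjI allI)
    show "norm w = 1" by (rule w1)
    fix s :: real
    define T where "T = \<bar>s\<bar> * norm x"
    have T0: "T \<ge> 0" by (simp add: T_def)
    have tri: "norm (s *\<^sub>R x + w) \<ge> norm (s *\<^sub>R x + u) - norm (u - w)"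
      using norm_triangle_ineq[of "s *\<^sub>R x + w" "u - w"] by simp
    have "Gq q (norm (s *\<^sub>R x + u)) \<beta> \<le> norm (s *\<^sub>R x + u) + \<beta>"
      using Gq_le_sum[of q "norm (s *\<^sub>R x + u)" \<beta>] q ab0 by simp
    hence h1: "norm (s *\<^sub>R x + u) \<ge> (1 - \<delta>) * (T + 1) - \<eta>" using H[of s] bet by (simp add: T_def)
    have "(\<epsilon> - \<delta>) * (T + 1) \<ge> (\<epsilon> - \<delta>) * 1" using d e T0 by (intro mult_left_mono) auto
    hence "(1 - \<epsilon>) * (T + 1) \<le> (1 - \<delta>) * (T + 1) - 2 * \<eta>" using d by (simp add: algebra_simps \<eta>_def)
    thus "norm (s *\<^sub>R x + w) \<ge> (1 - \<epsilon>) * (\<bar>s\<bar> * norm x + norm w)"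
      using h1 tri wu al w1 by (simp add: T_def)
  qed
qed


theorem proposition4p1:
  fixes TX :: "'a::banach itself" and TY :: "'b::banach itself"
  assumes "\<exists>x::'a. x \<noteq> 0" and "\<exists>y::'b. y \<noteq> 0"
  shows "(locally_octahedral TYPE('a) \<longrightarrow>
            locally_octahedral_wrt (psum_norm 1 :: 'a \<times> 'b \<Rightarrow> real))
       \<and> (\<forall>p::ereal. 1 < p \<longrightarrow> locally_octahedral TYPE('a) \<longrightarrow> locally_octahedral TYPE('b) \<longrightarrow>
            locally_octahedral_wrt (psum_norm p :: 'a \<times> 'b \<Rightarrow> real))
       \<and> (\<forall>p::ereal. 1 < p \<longrightarrow> locally_octahedral_wrt (psum_norm p :: 'a \<times> 'b \<Rightarrow> real) \<longrightarrow>
            locally_octahedral TYPE('a))"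
proof (intro conjI allI impI)
  show "locally_octahedral_wrt (psum_norm 1 :: 'a \<times> 'b \<Rightarrow> real)"
    if "locally_octahedral TYPE('a)" using partA that by blast
  show "locally_octahedral_wrt (psum_norm p :: 'a \<times> 'b \<Rightarrow> real)"
    if "1 < p" "locally_octahedral TYPE('a)" "locally_octahedral TYPE('b)" for p :: ereal
    using partB[of p] that(2,3) less_imp_le[OF that(1)] by blast
  fix p :: ereal
  assume p: "1 < p" and Z: "locally_octahedral_wrt (psum_norm p :: 'a \<times> 'b \<Rightarrow> real)"
  show "locally_octahedral TYPE('a)"
  proof (rule loh_small)
    show "0 \<le> norm v" for v :: 'a by simp
    fix x :: 'a and \<epsilon> :: real assume e: "0 < \<epsilon>" "\<epsilon> < 1"
    show "\<exists>w. norm w = 1 \<and> (\<forall>s::real. norm (s *\<^sub>R x + w) \<ge> (1 - \<epsilon>) * (\<bar>s\<bar> * norm x + norm w))"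
    proof (cases "x = 0")
      case True
      obtain e0 :: 'a where e0: "e0 \<noteq> 0" using assms(1) by blast
      show ?thesis
        by (intro exI[of _ "(1 / norm e0) *\<^sub>R e0"]) (use e0 e True in simp)
    next
      case False
      show ?thesis
      proof (cases "p = \<infinity>")
        case True
        have Z': "locally_octahedral_wrt (psum_norm \<infinity> :: 'a \<times> 'b \<Rightarrow> real)" using Z True by simp
        show ?thesis by (rule partC_inf[OF Z' False e])
      next
        case pinf: False
        obtain q where q: "p = ereal q" using p pinf by (cases p) auto
        have "1 < q" using p q by simp
        have Z': "locally_octahedral_wrt (psum_norm (ereal q) :: 'a \<times> 'b \<Rightarrow> real)" using Z q by simp
        show ?thesis by (rule partC_fin[OF Z' \<open>1 < q\<close> False e])
      qed
    qed
  qed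
qed

end
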